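(* Let $D_{m,n}:=(K+1)(m+n)$ and, for a constant $B>0$ and $\epsilon>0$, define the sieve $$\mathcal{H}_{m,n}(\epsilon):=\big\{\vartheta\in\mathcal{H}_{m,n}:\ e^{-B\epsilon^2/\bar\lambda_{m,n}}\le z_\ell\le e^{B\epsilon^2/\bar\lambda_{m,n}}\ \text{for all coordinates } \ell=1,\dots,D_{m,n}\big\}.$$ There exist constants $A,B,C_s>0$ such that whenever $\epsilon^2\ge A K(m\vee n)\bar\lambda_{m,n}L_{m,n}$, $$\Pi_{\mathrm{fac}}\big(\mathcal{H}_{m,n}(\epsilon)^c\big)\le\exp\big(-C_s\,\epsilon^2/\bar\lambda_{m,n}\big).$$
   Context: $n,m,K$ positive integers; $\bar\lambda_{m,n}\in(0,1/2]$; $L_{m,n}:=\log(m+n)+\log(1/\bar\lambda_{m,n})$. Factor space $\mathcal{H}_{m,n}:=\mathbb{R}_+^n\times\mathbb{R}_+^m\times\mathbb{R}_+^{n\times K}\times\mathbb{R}_+^{m\times K}$, with elements $\vartheta=(\alpha,\rho,\Theta,B)$ whose $D_{m,n}=(K+1)(m+n)$ scalar coordinates are denoted $z_\ell$. The prior $\Pi_{\mathrm{fac}}$ makes all coordinates independent with Gamma distributions: $\alpha_i\sim\Gamma(a_\alpha,b_\alpha)$, $\rho_j\sim\Gamma(a_\rho,b_\rho)$, $\Theta_{ik}\sim\Gamma(a_\theta,b_\theta)$, $B_{jk}\sim\Gamma(a_\beta,b_\beta)$ with fixed positive shape and rate hyperparameters. *)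

theory Defs
  imports "HOL-Probability.Probability"
begin

text \<open>Coordinates of the factor space: alpha_i (i<n), rho_j (j<m),
  Theta_ik (i<n, k<K), B_jk (j<m, k<K).\<close>
datatype fcoord = CAlpha nat | CRho nat | CTheta nat nat | CBeta nat nat

definition fac_coords :: "nat \<Rightarrow> nat \<Rightarrow> nat \<Rightarrow> fcoord set" where
  "fac_coords n m K =
     CAlpha ` {..<n} \<union> CRho ` {..<m}
     \<union> {CTheta i k | i k. i < n \<and> k < K} \<union> {CBeta j k | j k. j < m \<and> k < K}"

definition gamma_density :: "real \<Rightarrow> real \<Rightarrow> real \<Rightarrow> real" where
  "gamma_density a b x =
     (if x > 0 then b powr a * x powr (a - 1) * exp (- b * x) / Gamma a else 0)"

definition gamma_measure :: "real \<Rightarrow> real \<Rightarrow> real measure" where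
  "gamma_measure a b = density lborel (\<lambda>x. ennreal (gamma_density a b x))"

text \<open>Shape and rate of each coordinate, given hyperparameters
  (a_alpha,b_alpha,a_rho,b_rho,a_theta,b_theta,a_beta,b_beta).\<close>
fun coord_shape :: "real \<Rightarrow> real \<Rightarrow> real \<Rightarrow> real \<Rightarrow> fcoord \<Rightarrow> real" where
  "coord_shape aa ar ath ab (CAlpha _) = aa"
| "coord_shape aa ar ath ab (CRho _) = ar"
| "coord_shape aa ar ath ab (CTheta _ _) = ath"
| "coord_shape aa ar ath ab (CBeta _ _) = ab"

definition prior_fac ::
  "real \<Rightarrow> real \<Rightarrow> real \<Rightarrow> real \<Rightarrow> real \<Rightarrow> real \<Rightarrow> real \<Rightarrow> real \<Rightarrow>
   nat \<Rightarrow> nat \<Rightarrow> nat \<Rightarrow> (fcoord \<Rightarrow> real) measure" where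
  "prior_fac aa ba ar br ath bth ab bb n m K =
     PiM (fac_coords n m K)
       (\<lambda>l. gamma_measure (coord_shape aa ar ath ab l) (coord_shape ba br bth bb l))"

definition fac_sieve ::
  "nat \<Rightarrow> nat \<Rightarrow> nat \<Rightarrow> real \<Rightarrow> real \<Rightarrow> real \<Rightarrow> (fcoord \<Rightarrow> real) set" where
  "fac_sieve n m K B lam eps =
     {\<theta> \<in> PiE (fac_coords n m K) (\<lambda>_. UNIV).
        \<forall>l \<in> fac_coords n m K.
          exp (- B * eps\<^sup>2 / lam) \<le> \<theta> l \<and> \<theta> l \<le> exp (B * eps\<^sup>2 / lam)}"

definition L_mn :: "nat \<Rightarrow> nat \<Rightarrow> real \<Rightarrow> real" where
  "L_mn m n lam = ln (real (m + n)) + ln (1 / lam)"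

end

theory Submission
  imports Defs
begin

lemma gd_meas[measurable]: "gamma_density a b \<in> borel_measurable borel"
  unfolding gamma_density_def by measurable

lemma gamma_std:
  assumes a: "a > 0"
  shows "(\<integral>\<^sup>+t. ennreal (if t > 0 then t powr (a - 1) * exp (- t) / Gamma a else 0) \<partial>lborel) = 1"
proof -
  have h: "((\<lambda>t. t powr (a - 1) / exp t / Gamma a) has_integral Gamma a / Gamma a) {0..}"
    using has_integral_divide[OF Gamma_integral_real[OF a], of "Gamma a"] by simp
  have "(\<integral>\<^sup>+t. ennreal (t powr (a - 1) / exp t / Gamma a) * indicator {0..} t \<partial>lborel) = ennreal (Gamma a / Gamma a)"
    by (rule nn_integral_has_integral_lebesgue'[OF _ h]) (use a in auto)
  also have "Gamma a / Gamma a = 1" using Gamma_real_pos[OF a] by simp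
  also have "(\<integral>\<^sup>+t. ennreal (t powr (a - 1) / exp t / Gamma a) * indicator {0..} t \<partial>lborel)
     = (\<integral>\<^sup>+t. ennreal (if t > 0 then t powr (a - 1) * exp (- t) / Gamma a else 0) \<partial>lborel)"
    by (rule nn_integral_cong) (auto simp: indicator_def exp_minus field_simps)
  finally show ?thesis by simp
qed

lemma gamma_norm:
  assumes a: "a > 0" and b: "b > 0"
  shows "(\<integral>\<^sup>+x. ennreal (gamma_density a b x) \<partial>lborel) = 1"
proof -
  let ?f = "\<lambda>t. ennreal (if t > 0 then t powr (a - 1) * exp (- t) / Gamma a else 0)"
  have "1 = (\<integral>\<^sup>+t. ?f t \<partial>lborel)" using gamma_std[OF a] by simp
  also have "\<dots> = ennreal \<bar>b\<bar> * (\<integral>\<^sup>+x. ?f (0 + b * x) \<partial>lborel)"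
    by (rule nn_integral_real_affine) (use b in auto)
  also have "(\<lambda>x. ?f (0 + b * x)) = (\<lambda>x. ?f (b * x))"
    by (rule ext) simp
  also have "ennreal \<bar>b\<bar> * (\<integral>\<^sup>+x. ?f (b * x) \<partial>lborel) = (\<integral>\<^sup>+x. ennreal b * ?f (b * x) \<partial>lborel)"
    using b by (subst nn_integral_cmult) auto
  also have "\<dots> = (\<integral>\<^sup>+x. ennreal (gamma_density a b x) \<partial>lborel)"
  proof (rule nn_integral_cong)
    fix x :: real
    show "ennreal b * ?f (b * x) = ennreal (gamma_density a b x)"
    proof (cases "x > 0")
      case True
      have "b * ((b * x) powr (a - 1)) = b powr a * x powr (a - 1)"
        using b True by (simp add: powr_mult powr_diff field_simps)
      then have "b * ((b * x) powr (a - 1) * exp (- (b * x)) / Gamma a) = b powr a * x powr (a - 1) * exp (- b * x) / Gamma a"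
        by (simp add: field_simps)
      then have e: "b * ((b * x) powr (a - 1) * exp (- (b * x)) / Gamma a) = gamma_density a b x"
        using True by (simp add: gamma_density_def)
      have "ennreal b * ?f (b * x) = ennreal (b * ((b * x) powr (a - 1) * exp (- (b * x)) / Gamma a))"
        using True b a Gamma_real_pos[OF a] by (subst ennreal_mult) auto
      then show ?thesis using e by simp
    next
      case False
      then show ?thesis using b by (simp add: gamma_density_def zero_less_mult_iff)
    qed
  qed
  finally show ?thesis by simp
qed

lemma gamma_prob: "a > 0 \<Longrightarrow> b > 0 \<Longrightarrow> prob_space (gamma_measure a b)"
  by (rule prob_spaceI) (simp add: gamma_measure_def emeasure_density gamma_norm)

lemma gd_nonneg: "a > 0 \<Longrightarrow> b > 0 \<Longrightarrow> gamma_density a b x \<ge> 0"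
  unfolding gamma_density_def using Gamma_real_pos[of a] by auto

lemma gd_pointwise:
  assumes a: "a > 0" and b: "b > 0" and d: "0 < d" "d \<le> 1" and R: "1 \<le> R"
  shows "gamma_density a b x * indicator {x. x < d \<or> R < x} x
     \<le> (b powr (a/2) * Gamma (a/2) / Gamma a * d powr (a/2)) * gamma_density (a/2) b x
       + (a / b / R) * gamma_density (a+1) b x"
proof -
  have G: "Gamma a > 0" "Gamma (a/2) > 0" using a by auto
  have G1: "Gamma (a+1) = a * Gamma a" using Gamma_plus1[of a] a nonpos_Ints_nonpos[of a] by fastforce
  have nn: "gamma_density (a/2) b x \<ge> 0" "gamma_density (a+1) b x \<ge> 0"
    using gd_nonneg a b by auto
  have c1: "b powr (a/2) * Gamma (a/2) / Gamma a * d powr (a/2) \<ge> 0" using G by auto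
  have c2: "a / b / R \<ge> 0" using a b R by auto
  have rhs: "0 \<le> (b powr (a/2) * Gamma (a/2) / Gamma a * d powr (a/2)) * gamma_density (a/2) b x
       + (a / b / R) * gamma_density (a+1) b x"
    by (intro add_nonneg_nonneg mult_nonneg_nonneg c1 c2 nn)
  show ?thesis
  proof (cases "x > 0 \<and> x < d")
    case True
    then have x: "x > 0" "x < d" by auto
    have p1: "x powr (a - 1) = x powr (a/2) * x powr (a/2 - 1)"
      using x by (simp add: powr_add[symmetric])
    have p2: "x powr (a/2) \<le> d powr (a/2)" using x a by (intro powr_mono2) auto
    have bb: "b powr a = b powr (a/2) * b powr (a/2)" using b by (simp add: powr_add[symmetric])
    have "gamma_density a b x = b powr a * x powr (a - 1) * exp (- b * x) / Gamma a"
      using x by (simp add: gamma_density_def)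
    also have "\<dots> = (b powr (a/2) * Gamma (a/2) / Gamma a * x powr (a/2)) * (b powr (a/2) * x powr (a/2 - 1) * exp (- b * x) / Gamma (a/2))"
      using G by (simp add: p1 bb field_simps)
    also have "\<dots> \<le> (b powr (a/2) * Gamma (a/2) / Gamma a * d powr (a/2)) * (b powr (a/2) * x powr (a/2 - 1) * exp (- b * x) / Gamma (a/2))"
      using p2 G b by (intro mult_right_mono mult_left_mono) auto
    also have "\<dots> = (b powr (a/2) * Gamma (a/2) / Gamma a * d powr (a/2)) * gamma_density (a/2) b x"
      using x by (simp add: gamma_density_def)
    finally have calc: "gamma_density a b x \<le> (b powr (a/2) * Gamma (a/2) / Gamma a * d powr (a/2)) * gamma_density (a/2) b x" .
    have L: "gamma_density a b x * indicator {x. x < d \<or> R < x} x = gamma_density a b x"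
      using x by (simp add: indicator_def)
    show ?thesis using L calc mult_nonneg_nonneg[OF c2 nn(2)] by linarith
  next
    case nt: False
    show ?thesis
    proof (cases "x > R")
      case True
      then have x: "x > 0" "x > R" using R by auto
      have p1: "x powr a = x * x powr (a - 1)"
        using x by (simp add: powr_add[symmetric] powr_mult_base)
      have bb: "b powr (a+1) = b * b powr a" using b by (simp add: powr_add)
      have "gamma_density a b x = b powr a * x powr (a - 1) * exp (- b * x) / Gamma a"
        using x by (simp add: gamma_density_def)
      also have "\<dots> \<le> b powr a * (x / R * x powr (a - 1)) * exp (- b * x) / Gamma a"
      proof -
        have "1 \<le> x / R" using x R by simp
        then have "x powr (a - 1) \<le> x / R * x powr (a - 1)"
          using mult_right_mono[of 1 "x / R" "x powr (a - 1)"] by simp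
        then show ?thesis using x R G b
          by (intro divide_right_mono mult_right_mono mult_left_mono) auto
      qed
      also have "\<dots> = (a / b / R) * gamma_density (a+1) b x"
      proof -
        have G1': "Gamma (1 + a) = a * Gamma a" using G1 by (simp add: add.commute)
        have bb': "b powr (1 + a) = b * b powr a" using bb by (simp add: add.commute)
        show ?thesis
          using x G a b R by (simp add: gamma_density_def G1 bb p1 G1' bb' field_simps)
      qed
      finally have calc: "gamma_density a b x \<le> (a / b / R) * gamma_density (a+1) b x" .
      have L: "gamma_density a b x * indicator {x. x < d \<or> R < x} x = gamma_density a b x"
        using x by (simp add: indicator_def)
      show ?thesis using L calc mult_nonneg_nonneg[OF c1 nn(1)] by linarith
    next
      case False
      then have "indicator {x. x < d \<or> R < x} x = (0::real) \<or> x \<le> 0"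
        using nt by (auto simp: indicator_def)
      then show ?thesis using rhs by (auto simp: gamma_density_def)
    qed
  qed
qed

definition Cg :: "real \<Rightarrow> real \<Rightarrow> real" where
  "Cg a b = b powr (a/2) * Gamma (a/2) / Gamma a + a / b"

lemma Cg_nonneg: "a > 0 \<Longrightarrow> b > 0 \<Longrightarrow> Cg a b \<ge> 0"
  unfolding Cg_def by (intro add_nonneg_nonneg) auto

lemma gamma_tail:
  assumes a: "a > 0" and b: "b > 0" and t: "t \<ge> 0"
  shows "measure (gamma_measure a b) {x. x < exp (- t) \<or> exp t < x} \<le> Cg a b * exp (- min (a/2) 1 * t)"
proof -
  interpret P: prob_space "gamma_measure a b" using gamma_prob[OF a b] .
  define d where "d = exp (- t)"
  define R where "R = exp t"
  define K1 where "K1 = b powr (a/2) * Gamma (a/2) / Gamma a * d powr (a/2)"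
  define K2 where "K2 = a / b / R"
  have d: "0 < d" "d \<le> 1" using t by (auto simp: d_def)
  have R: "1 \<le> R" using t by (auto simp: R_def)
  have K1: "K1 \<ge> 0" unfolding K1_def using Gamma_real_pos[of a] Gamma_real_pos[of "a/2"] a by (intro mult_nonneg_nonneg divide_nonneg_nonneg) auto
  have K2: "K2 \<ge> 0" unfolding K2_def using a b R by auto
  let ?S = "{x. x < d \<or> R < x}"
  have S: "?S \<in> sets borel" by measurable
  have "emeasure (gamma_measure a b) ?S = (\<integral>\<^sup>+x. ennreal (gamma_density a b x) * indicator ?S x \<partial>lborel)"
    unfolding gamma_measure_def by (subst emeasure_density) (auto simp: S)
  also have "\<dots> = (\<integral>\<^sup>+x. ennreal (gamma_density a b x * indicator ?S x) \<partial>lborel)"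
    by (rule nn_integral_cong) (auto simp: indicator_def)
  also have "\<dots> \<le> (\<integral>\<^sup>+x. ennreal K1 * ennreal (gamma_density (a/2) b x) + ennreal K2 * ennreal (gamma_density (a+1) b x) \<partial>lborel)"
  proof (rule nn_integral_mono)
    fix x :: real
    have "gamma_density a b x * indicator ?S x \<le> K1 * gamma_density (a/2) b x + K2 * gamma_density (a+1) b x"
      unfolding K1_def K2_def by (rule gd_pointwise[OF a b d R])
    then have "ennreal (gamma_density a b x * indicator ?S x) \<le> ennreal (K1 * gamma_density (a/2) b x + K2 * gamma_density (a+1) b x)"
      by (rule ennreal_leI)
    also have "\<dots> = ennreal K1 * ennreal (gamma_density (a/2) b x) + ennreal K2 * ennreal (gamma_density (a+1) b x)"
      using K1 K2 gd_nonneg[of "a/2" b x] gd_nonneg[of "a+1" b x] a b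
      by (simp add: ennreal_plus[symmetric] ennreal_mult)
    finally show "ennreal (gamma_density a b x * indicator ?S x) \<le> ennreal K1 * ennreal (gamma_density (a/2) b x) + ennreal K2 * ennreal (gamma_density (a+1) b x)" .
  qed
  also have "\<dots> = ennreal K1 * (\<integral>\<^sup>+x. ennreal (gamma_density (a/2) b x) \<partial>lborel) + ennreal K2 * (\<integral>\<^sup>+x. ennreal (gamma_density (a+1) b x) \<partial>lborel)"
    by (simp add: nn_integral_add nn_integral_cmult)
  also have "\<dots> = ennreal (K1 + K2)"
    using a b K1 K2 by (simp add: gamma_norm ennreal_plus)
  finally have E: "emeasure (gamma_measure a b) ?S \<le> ennreal (K1 + K2)" .
  have M: "measure (gamma_measure a b) ?S \<le> K1 + K2"
    using E K1 K2 by (simp add: P.emeasure_eq_measure ennreal_plus[symmetric] del: ennreal_plus)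
  have mm1: "min (a/2) 1 * t \<le> (a/2) * t" using t by (intro mult_right_mono) auto
  have mm2: "min (a/2) 1 * t \<le> 1 * t" using t by (intro mult_right_mono) auto
  have "d powr (a/2) = exp (- (a/2) * t)" unfolding d_def by (simp add: powr_def)
  also have "\<dots> \<le> exp (- min (a/2) 1 * t)" using mm1 by (intro exp_mono) linarith
  finally have e1: "d powr (a/2) \<le> exp (- min (a/2) 1 * t)" .
  have "1 / R = exp (- 1 * t)" unfolding R_def by (simp add: exp_minus field_simps)
  also have "\<dots> \<le> exp (- min (a/2) 1 * t)" using mm2 by (intro exp_mono) linarith
  finally have e2: "1 / R \<le> exp (- min (a/2) 1 * t)" .
  have "K1 \<le> b powr (a/2) * Gamma (a/2) / Gamma a * exp (- min (a/2) 1 * t)"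
    unfolding K1_def using e1 a by (intro mult_left_mono) auto
  moreover have "K2 \<le> a / b * exp (- min (a/2) 1 * t)"
    unfolding K2_def using e2 a b by (metis divide_divide_eq_left divide_nonneg_nonneg less_eq_real_def mult_left_mono times_divide_eq_right mult_1_right)
  ultimately have "K1 + K2 \<le> Cg a b * exp (- min (a/2) 1 * t)"
    unfolding Cg_def by (simp add: distrib_right)
  with M show ?thesis unfolding d_def R_def by simp
qed

lemma arith_final:
  fixes D N C0 u c t :: real
  assumes N: "N \<ge> 1" and D: "D \<le> 4 * N" "D \<ge> 0" and C0: "C0 \<ge> 1" and u: "u \<ge> N"
    and ct: "c * t = (2 + ln (4 * C0)) * u"
  shows "D * (C0 * exp (- c * t)) \<le> exp (- 1 * u)"
proof -
  define L where "L = ln (4 * C0)"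
  have L0: "L \<ge> 0" unfolding L_def using C0 by simp
  have eL: "exp L = 4 * C0" unfolding L_def using C0 by simp
  have u1: "u \<ge> 1" using N u by linarith
  have "L \<le> L * u" using L0 u1 mult_left_mono[of 1 u L] by simp
  then have "exp L \<le> exp (L * u)" by simp
  moreover have "N \<le> exp N" using exp_ge_add_one_self[of N] by linarith
  moreover have "exp N \<le> exp u" using u by simp
  ultimately have "N * (4 * C0) \<le> exp u * exp (L * u)"
    using eL C0 N by (intro mult_mono) (auto intro: order_trans)
  moreover have "D * C0 \<le> N * (4 * C0)" using D C0 mult_right_mono[of D "4*N" C0] by (simp add: algebra_simps)
  moreover have "exp u * exp (L * u) = exp ((1 + L) * u)" by (simp add: exp_add[symmetric] algebra_simps)
  ultimately have "D * C0 \<le> exp ((1 + L) * u)" by linarith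
  then have "D * C0 * exp (- ((1 + L) * u)) \<le> exp ((1 + L) * u) * exp (- ((1 + L) * u))"
    by (rule mult_right_mono) simp
  also have "\<dots> = 1" by (simp add: exp_minus)
  finally have "D * C0 * exp (- ((1 + L) * u)) \<le> 1" .
  then have "D * C0 * exp (- ((1 + L) * u)) * exp (- u) \<le> exp (- u)"
    using mult_right_mono[of _ 1 "exp (- u)"] by fastforce
  moreover have "exp (- c * t) = exp (- ((1 + L) * u)) * exp (- u)"
    using ct unfolding L_def by (simp add: exp_add[symmetric] algebra_simps)
  ultimately show ?thesis by (simp add: algebra_simps)
qed

lemma card_coords: "finite (fac_coords n m K) \<and> card (fac_coords n m K) \<le> (K + 1) * (m + n)"
proof -
  have e1: "{CTheta i k | i k. i < n \<and> k < K} = (\<lambda>(i,k). CTheta i k) ` ({..<n} \<times> {..<K})" by auto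
  have e2: "{CBeta i k | i k. i < m \<and> k < K} = (\<lambda>(i,k). CBeta i k) ` ({..<m} \<times> {..<K})" by auto
  have f: "finite (fac_coords n m K)" unfolding fac_coords_def e1 e2 by auto
  have "card (fac_coords n m K) \<le> card (CAlpha ` {..<n}) + card (CRho ` {..<m})
      + card ((\<lambda>(i,k). CTheta i k) ` ({..<n} \<times> {..<K})) + card ((\<lambda>(i,k). CBeta i k) ` ({..<m} \<times> {..<K}))"
    unfolding fac_coords_def e1 e2
    by (rule order_trans[OF card_Un_le] add_mono order_trans[OF card_Un_le] le_refl)+
  also have "\<dots> \<le> n + m + n * K + m * K"
    by (intro add_mono order_trans[OF card_image_le]) (auto simp: card_cartesian_product)
  also have "\<dots> = (K + 1) * (m + n)" by (simp add: algebra_simps)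
  finally show ?thesis using f by simp
qed

lemma shape_pos:
  "aa > 0 \<Longrightarrow> ar > 0 \<Longrightarrow> ath > 0 \<Longrightarrow> ab > 0 \<Longrightarrow> coord_shape aa ar ath ab l > 0"
  by (cases l) auto

lemma tail_generic:
  assumes "a > 0" "b > 0" "t \<ge> 0" "0 < c" "c \<le> min (a/2) 1" "Cg a b \<le> C0"
  shows "measure (gamma_measure a b) {x. x < exp (- t) \<or> exp t < x} \<le> C0 * exp (- c * t)"
proof -
  have "exp (- min (a/2) 1 * t) \<le> exp (- c * t)"
    using assms mult_right_mono[of c "min (a/2) 1" t] by simp
  then have "Cg a b * exp (- min (a/2) 1 * t) \<le> C0 * exp (- c * t)"
    using assms Cg_nonneg[of a b] by (intro mult_mono) auto
  then show ?thesis using gamma_tail[OF assms(1-3)] by linarith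
qed

lemma PiM_single:
  assumes M: "\<And>i. i \<in> I \<Longrightarrow> prob_space (M i)" and l: "l \<in> I" and S: "S \<in> sets (M l)"
  shows "measure (PiM I M) {\<theta> \<in> space (PiM I M). \<theta> l \<in> S} = measure (M l) S"
proof -
  have "{\<theta> \<in> space (PiM I M). \<theta> l \<in> S} = prod_emb I M {l} (PiE {l} (\<lambda>_. S))"
    using l by (auto simp: prod_emb_def space_PiM PiE_iff extensional_def)
  then have "emeasure (PiM I M) {\<theta> \<in> space (PiM I M). \<theta> l \<in> S} = emeasure (M l) S"
    using emeasure_PiM_emb[OF M, where J="{l}" and A="\<lambda>_. S"] l S by simp
  then show ?thesis by (simp add: measure_def)
qed

theorem propositionL5:
  fixes aa ba ar br ath bth ab bb :: real
  assumes "aa > 0" "ba > 0" "ar > 0" "br > 0" "ath > 0" "bth > 0" "ab > 0" "bb > 0"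
  shows "\<exists>A B Cs :: real. A > 0 \<and> B > 0 \<and> Cs > 0 \<and>
    (\<forall>(n::nat) (m::nat) (K::nat) (lam::real) (eps::real).
       n \<ge> 1 \<longrightarrow> m \<ge> 1 \<longrightarrow> K \<ge> 1 \<longrightarrow> 0 < lam \<longrightarrow> lam \<le> 1/2 \<longrightarrow> eps > 0 \<longrightarrow>
       eps\<^sup>2 \<ge> A * real K * real (max m n) * lam * L_mn m n lam \<longrightarrow>
       measure (prior_fac aa ba ar br ath bth ab bb n m K)
         (space (prior_fac aa ba ar br ath bth ab bb n m K) - fac_sieve n m K B lam eps)
       \<le> exp (- Cs * eps\<^sup>2 / lam))"
proof -
  define c where "c = min (min (min (aa/2) (ar/2)) (min (ath/2) (ab/2))) 1"
  define C0 where "C0 = 1 + Cg aa ba + Cg ar br + Cg ath bth + Cg ab bb"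
  define Bc where "Bc = (2 + ln (4 * C0)) / c"
  define Ml where "Ml = (\<lambda>l. gamma_measure (coord_shape aa ar ath ab l) (coord_shape ba br bth bb l))"
  have cpos: "c > 0" unfolding c_def using assms by auto
  have Cgs: "Cg aa ba \<ge> 0" "Cg ar br \<ge> 0" "Cg ath bth \<ge> 0" "Cg ab bb \<ge> 0"
    using Cg_nonneg assms by auto
  have C0: "C0 \<ge> 1" unfolding C0_def using Cgs by linarith
  have Bpos: "Bc > 0" unfolding Bc_def using cpos C0
    by (intro divide_pos_pos) (auto intro!: add_pos_nonneg)
  have probM: "prob_space (Ml l)" for l
    unfolding Ml_def by (rule gamma_prob) (auto intro: shape_pos assms)
  have c_le: "c \<le> min (aa/2) 1" "c \<le> min (ar/2) 1" "c \<le> min (ath/2) 1" "c \<le> min (ab/2) 1"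
    unfolding c_def by linarith+
  have Cg_le: "Cg aa ba \<le> C0" "Cg ar br \<le> C0" "Cg ath bth \<le> C0" "Cg ab bb \<le> C0"
    unfolding C0_def using Cgs by linarith+
  have tailM: "measure (Ml l) {x. x < exp (- t) \<or> exp t < x} \<le> C0 * exp (- c * t)" if t: "t \<ge> 0" for l t
  proof (cases l)
    case (CAlpha x1)
    then have "Ml l = gamma_measure aa ba" by (simp add: Ml_def)
    then show ?thesis using tail_generic[OF assms(1,2) t cpos c_le(1) Cg_le(1)] by simp
  next
    case (CRho x2)
    then have "Ml l = gamma_measure ar br" by (simp add: Ml_def)
    then show ?thesis using tail_generic[OF assms(3,4) t cpos c_le(2) Cg_le(2)] by simp
  next
    case (CTheta x31 x32)
    then have "Ml l = gamma_measure ath bth" by (simp add: Ml_def)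
    then show ?thesis using tail_generic[OF assms(5,6) t cpos c_le(3) Cg_le(3)] by simp
  next
    case (CBeta x41 x42)
    then have "Ml l = gamma_measure ab bb" by (simp add: Ml_def)
    then show ?thesis using tail_generic[OF assms(7,8) t cpos c_le(4) Cg_le(4)] by simp
  qed
  have main: "measure (prior_fac aa ba ar br ath bth ab bb n m K)
         (space (prior_fac aa ba ar br ath bth ab bb n m K) - fac_sieve n m K Bc lam eps)
       \<le> exp (- 1 * eps\<^sup>2 / lam)"
    if n: "n \<ge> 1" and m: "m \<ge> 1" and K: "K \<ge> 1" and lam: "0 < lam" "lam \<le> 1/2"
      and eps: "eps > 0"
      and big: "eps\<^sup>2 \<ge> 1 * real K * real (max m n) * lam * L_mn m n lam"
    for n m K :: nat and lam eps :: real
  proof -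
    define I where "I = fac_coords n m K"
    define P where "P = PiM I Ml"
    have P_eq: "prior_fac aa ba ar br ath bth ab bb n m K = P"
      unfolding P_def I_def Ml_def prior_fac_def by simp
    define u where "u = eps\<^sup>2 / lam"
    define t where "t = Bc * eps\<^sup>2 / lam"
    have t0: "t \<ge> 0" unfolding t_def using Bpos lam by auto
    define S where "S = {x::real. x < exp (- t) \<or> exp t < x}"
    have Sb: "S \<in> sets borel" unfolding S_def by measurable
    have spaceP: "space P = PiE I (\<lambda>_. UNIV)"
      unfolding P_def Ml_def by (simp add: space_PiM gamma_measure_def)
    have seteq: "space P - fac_sieve n m K Bc lam eps = (\<Union>l\<in>I. {\<theta> \<in> space P. \<theta> l \<in> S})"
    proof -
      have ex: "exp (- Bc * eps\<^sup>2 / lam) = exp (- t)" "exp (Bc * eps\<^sup>2 / lam) = exp t"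
        by (simp_all add: t_def)
      show ?thesis
        unfolding fac_sieve_def spaceP S_def ex I_def by (auto simp: not_le)
    qed
    have fin: "finite I" and cardI: "card I \<le> (K + 1) * (m + n)"
      using card_coords unfolding I_def by auto
    have sets_l: "{\<theta> \<in> space P. \<theta> l \<in> S} \<in> sets P" if "l \<in> I" for l
    proof -
      have "(\<lambda>\<theta>. \<theta> l) \<in> measurable P (Ml l)"
        unfolding P_def using that by (rule measurable_component_singleton)
      moreover have "S \<in> sets (Ml l)" using Sb by (simp add: Ml_def gamma_measure_def)
      ultimately have "(\<lambda>\<theta>. \<theta> l) -` S \<inter> space P \<in> sets P" by (rule measurable_sets)
      moreover have "(\<lambda>\<theta>. \<theta> l) -` S \<inter> space P = {\<theta> \<in> space P. \<theta> l \<in> S}" by auto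
      ultimately show ?thesis by simp
    qed
    have "measure P (space P - fac_sieve n m K Bc lam eps) \<le> (\<Sum>l\<in>I. measure P {\<theta> \<in> space P. \<theta> l \<in> S})"
      unfolding seteq by (rule measure_UNION_le[OF fin sets_l])
    also have "\<dots> = (\<Sum>l\<in>I. measure (Ml l) S)"
    proof (rule sum.cong[OF refl])
      fix l assume "l \<in> I"
      then show "measure P {\<theta> \<in> space P. \<theta> l \<in> S} = measure (Ml l) S"
        unfolding P_def using probM Sb by (intro PiM_single) (auto simp: Ml_def gamma_measure_def)
    qed
    also have "\<dots> \<le> (\<Sum>l\<in>I. C0 * exp (- c * t))"
      by (rule sum_mono) (use tailM[OF t0] in \<open>simp add: S_def\<close>)
    also have "\<dots> = real (card I) * (C0 * exp (- c * t))" by simp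
    also have "\<dots> \<le> exp (- 1 * u)"
    proof (rule arith_final[where N = "real K * real (max m n)"])
      have k1: "1 \<le> real K" using K by simp
      have k2: "1 \<le> real (max m n)" using m by simp
      show "1 \<le> real K * real (max m n)" using mult_mono[OF k1 k2] by simp
      have "real (card I) \<le> real ((K + 1) * (m + n))" using cardI by linarith
      also have "\<dots> \<le> 4 * (real K * real (max m n))"
      proof -
        have "real K + 1 \<le> 2 * real K" using K by simp
        moreover have "real m + real n \<le> 2 * real (max m n)" by (simp add: max_def)
        ultimately have "(real K + 1) * (real m + real n) \<le> (2 * real K) * (2 * real (max m n))"
          by (intro mult_mono) auto
        then show ?thesis by (simp add: algebra_simps)
      qed
      finally show "real (card I) \<le> 4 * (real K * real (max m n))" .
      show "0 \<le> real (card I)" by simp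
      show "1 \<le> C0" by (rule C0)
      have L1: "L_mn m n lam \<ge> 1"
      proof -
        have "ln 2 \<le> ln (real (m + n))" using m n by simp
        moreover have "ln 2 \<le> ln (1 / lam)" using lam by (simp add: field_simps)
        moreover have "1 \<le> ln (4::real)" using exp_le by (subst ln_ge_iff) auto
        moreover have "ln (4::real) = ln 2 + ln 2" using ln_mult[of 2 2] by simp
        ultimately show ?thesis unfolding L_mn_def by linarith
      qed
      have "real K * real (max m n) * lam \<le> real K * real (max m n) * lam * L_mn m n lam"
        using L1 lam by (simp add: mult_left_mono[of 1 _ "real K * real (max m n) * lam", simplified])
      then have "real K * real (max m n) * lam \<le> eps\<^sup>2" using big by simp
      then show "real K * real (max m n) \<le> u" unfolding u_def using lam by (simp add: field_simps)
      show "c * t = (2 + ln (4 * C0)) * u" unfolding t_def u_def Bc_def using cpos lam by (simp add: field_simps)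
    qed
    finally show ?thesis unfolding P_eq u_def by simp
  qed
  show ?thesis
    apply (rule exI[of _ 1], rule exI[of _ Bc], rule exI[of _ 1])
    using Bpos main by auto
qed

end
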